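(* Let $p$ be a prime, $h_1,h_2$ relatively prime positive integers, and $F$ the 2-dimensional Lubin–Tate formal group over $\mathbb{Z}_p$ associated with $(h_1,h_2)$. For every integer $n\ge1$, the field $\mathbb{Q}_p(F[p^n])$ generated over $\mathbb{Q}_p$ by the coordinates of the $p^n$-torsion points of $F$ is a Galois extension of $\mathbb{Q}_p$.
   Context: With $h=h_1+h_2$, let $L=(L_1,L_2)$ with $L_1=x_1+\sum_{k\ge1}p^{-2k}x_1^{p^{kh}}+\sum_{k\ge0}p^{-(2k+1)}x_2^{p^{h_1+kh}}$, $L_2=x_2+\sum_{k\ge1}p^{-2k}x_2^{p^{kh}}+\sum_{k\ge0}p^{-(2k+1)}x_1^{p^{h_2+kh}}$, and $F(X,Y)=L^{-1}(L(X)+L(Y))$, a 2-dimensional formal group with coefficients in $\mathbb{Z}_p$. For $a\in\mathbb{Z}_p$, $[a]_F(X)=L^{-1}(aL(X))$, and $F[p^n]=\{X\in\overline{\mathbb{Q}}_p^{\,2}:[p^n]_F(X)=\vec0\}$. *)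

theory Defs
  imports Complex_Main "HOL-Computational_Algebra.Polynomial"
begin

type_synonym 'a ps2 = "nat \<times> nat \<Rightarrow> 'a"

definition ps_one :: "'a::comm_ring_1 ps2" where
  "ps_one = (\<lambda>(a,b). if a = 0 \<and> b = 0 then 1 else 0)"

definition ps_X1 :: "'a::comm_ring_1 ps2" where
  "ps_X1 = (\<lambda>(a,b). if a = 1 \<and> b = 0 then 1 else 0)"

definition ps_X2 :: "'a::comm_ring_1 ps2" where
  "ps_X2 = (\<lambda>(a,b). if a = 0 \<and> b = 1 then 1 else 0)"

definition ps_mult :: "'a::comm_ring_1 ps2 \<Rightarrow> 'a ps2 \<Rightarrow> 'a ps2" where
  "ps_mult f g = (\<lambda>(a,b). \<Sum>i\<le>a. \<Sum>j\<le>b. f (i,j) * g (a - i, b - j))"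

primrec ps_pow :: "'a::comm_ring_1 ps2 \<Rightarrow> nat \<Rightarrow> 'a ps2" where
  "ps_pow f 0 = ps_one"
| "ps_pow f (Suc n) = ps_mult f (ps_pow f n)"

text \<open>Substitution S(G1,G2) of a pair of series without constant term into S;
  only monomials of total degree at most a+b contribute to the coefficient at (a,b).\<close>
definition ps_comp :: "'a::comm_ring_1 ps2 \<Rightarrow> 'a ps2 \<times> 'a ps2 \<Rightarrow> 'a ps2" where
  "ps_comp S G = (\<lambda>(a,b). \<Sum>(i,j)\<in>{(i,j). i + j \<le> a + b}.
      S (i,j) * ps_mult (ps_pow (fst G) i) (ps_pow (snd G) j) (a,b))"

definition ps_comp2 :: "'a::comm_ring_1 ps2 \<times> 'a ps2 \<Rightarrow> 'a ps2 \<times> 'a ps2 \<Rightarrow> 'a ps2 \<times> 'a ps2" where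
  "ps_comp2 S G = (ps_comp (fst S) G, ps_comp (snd S) G)"

section \<open>The logarithm L of the 2-dimensional Lubin--Tate group attached to (h1,h2)\<close>

text \<open>Coefficients of
  L1 = x1 + sum_{k>=1} p^{-2k} x1^{p^{kh}} + sum_{k>=0} p^{-(2k+1)} x2^{p^{h1+kh}},  h = h1 + h2.\<close>
definition LT_L1 :: "nat \<Rightarrow> nat \<Rightarrow> nat \<Rightarrow> rat ps2" where
  "LT_L1 p h1 h2 = (\<lambda>(i,j).
      (if j = 0 then (if i = 1 then 1 else 0)
          + (\<Sum>k\<in>{k. 1 \<le> k \<and> p ^ (k * (h1 + h2)) = i}. 1 / of_nat p ^ (2 * k))
       else 0)
    + (if i = 0 then (\<Sum>k\<in>{k. p ^ (h1 + k * (h1 + h2)) = j}. 1 / of_nat p ^ (2 * k + 1))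
       else 0))"

text \<open>L2 = x2 + sum_{k>=1} p^{-2k} x2^{p^{kh}} + sum_{k>=0} p^{-(2k+1)} x1^{p^{h2+kh}}.\<close>
definition LT_L2 :: "nat \<Rightarrow> nat \<Rightarrow> nat \<Rightarrow> rat ps2" where
  "LT_L2 p h1 h2 = (\<lambda>(i,j). LT_L1 p h2 h1 (j,i))"

definition LT_L :: "nat \<Rightarrow> nat \<Rightarrow> nat \<Rightarrow> rat ps2 \<times> rat ps2" where
  "LT_L p h1 h2 = (LT_L1 p h1 h2, LT_L2 p h1 h2)"

definition LT_Linv :: "nat \<Rightarrow> nat \<Rightarrow> nat \<Rightarrow> rat ps2 \<times> rat ps2" where
  "LT_Linv p h1 h2 = (THE G. fst G (0,0) = 0 \<and> snd G (0,0) = 0 \<and>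
      ps_comp2 (LT_L p h1 h2) G = (ps_X1, ps_X2))"

definition LT_mult :: "nat \<Rightarrow> nat \<Rightarrow> nat \<Rightarrow> rat \<Rightarrow> rat ps2 \<times> rat ps2" where
  "LT_mult p h1 h2 a = ps_comp2 (LT_Linv p h1 h2)
      ((\<lambda>ij. a * fst (LT_L p h1 h2) ij), (\<lambda>ij. a * snd (LT_L p h1 h2) ij))"

definition av_has_sum :: "('a::field \<Rightarrow> real) \<Rightarrow> ('i \<Rightarrow> 'a) \<Rightarrow> 'a \<Rightarrow> bool" where
  "av_has_sum av f s \<longleftrightarrow> (\<forall>e>0. \<exists>S0. finite S0 \<and>
      (\<forall>S. finite S \<and> S0 \<subseteq> S \<longrightarrow> av (sum f S - s) < e))"

text \<open>The closure of Q in the valued field: this is Q_p.\<close>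
definition Qp_in :: "('a::field_char_0 \<Rightarrow> real) \<Rightarrow> 'a set" where
  "Qp_in av = {x. \<forall>e>0. \<exists>q::rat. av (x - of_rat q) < e}"

definition poly_over :: "'a::comm_ring_1 set \<Rightarrow> 'a poly \<Rightarrow> bool" where
  "poly_over E P \<longleftrightarrow> (\<forall>i. coeff P i \<in> E)"

text \<open>av makes 'a a non-archimedean valued field, with the p-adic absolute value on Q
  (|p| = 1/p), in which the closure of Q is complete (hence equals Q_p), which is
  algebraically closed and algebraic over that closure: i.e. 'a is an algebraic closure
  of Q_p with its (unique) extended absolute value.\<close>
definition is_Qp_bar :: "nat \<Rightarrow> ('a::field_char_0 \<Rightarrow> real) \<Rightarrow> bool" where
  "is_Qp_bar p av \<longleftrightarrow>
     (\<forall>x. av x \<ge> 0) \<and> (\<forall>x. av x = 0 \<longleftrightarrow> x = 0) \<and>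
     (\<forall>x y. av (x * y) = av x * av y) \<and>
     (\<forall>x y. av (x + y) \<le> max (av x) (av y)) \<and>
     av (of_nat p) = 1 / real p \<and>
     (\<forall>f::nat \<Rightarrow> rat. (\<forall>e>0. \<exists>N. \<forall>m\<ge>N. \<forall>k\<ge>N. av (of_rat (f m) - of_rat (f k)) < e) \<longrightarrow>
        (\<exists>x. \<forall>e>0. \<exists>N. \<forall>m\<ge>N. av (of_rat (f m) - x) < e)) \<and>
     (\<forall>P::'a poly. degree P > 0 \<longrightarrow> (\<exists>x. poly P x = 0)) \<and>
     (\<forall>x. \<exists>P. P \<noteq> 0 \<and> poly_over (Qp_in av) P \<and> poly P x = 0)"

definition av_eval :: "('a::field_char_0 \<Rightarrow> real) \<Rightarrow> rat ps2 \<Rightarrow> 'a \<times> 'a \<Rightarrow> 'a \<Rightarrow> bool" where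
  "av_eval av f X s \<longleftrightarrow> av_has_sum av (\<lambda>(i,j). of_rat (f (i,j)) * fst X ^ i * snd X ^ j) s"

text \<open>F[p^n]: points X (in the maximal ideal, where F is defined) with [p^n]_F(X) = 0.\<close>
definition LT_torsion :: "('a::field_char_0 \<Rightarrow> real) \<Rightarrow> nat \<Rightarrow> nat \<Rightarrow> nat \<Rightarrow> nat \<Rightarrow> ('a \<times> 'a) set" where
  "LT_torsion av p h1 h2 n = {X. av (fst X) < 1 \<and> av (snd X) < 1 \<and>
      av_eval av (fst (LT_mult p h1 h2 (of_nat (p ^ n)))) X 0 \<and>
      av_eval av (snd (LT_mult p h1 h2 (of_nat (p ^ n)))) X 0}"

definition is_subfield :: "'a::field set \<Rightarrow> bool" where
  "is_subfield K \<longleftrightarrow> 0 \<in> K \<and> 1 \<in> K \<and> (\<forall>x\<in>K. \<forall>y\<in>K. x + y \<in> K \<and> x * y \<in> K) \<and>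
     (\<forall>x\<in>K. - x \<in> K \<and> inverse x \<in> K)"

definition field_gen :: "'a::field set \<Rightarrow> 'a set \<Rightarrow> 'a set" where
  "field_gen E A = \<Inter>{K. is_subfield K \<and> E \<subseteq> K \<and> A \<subseteq> K}"

definition is_min_poly :: "'a::field set \<Rightarrow> 'a \<Rightarrow> 'a poly \<Rightarrow> bool" where
  "is_min_poly E x m \<longleftrightarrow> poly_over E m \<and> m \<noteq> 0 \<and> lead_coeff m = 1 \<and> poly m x = 0 \<and>
     (\<forall>P. poly_over E P \<and> P \<noteq> 0 \<and> poly P x = 0 \<longrightarrow> degree m \<le> degree P)"

text \<open>K/E (inside an algebraically closed field) is Galois: algebraic, normal (the minimal
  polynomial over E of each element of K splits into linear factors over K, i.e. all its roots
  lie in K) and separable (these minimal polynomials have no multiple roots).\<close>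
definition galois_ext :: "'a::field set \<Rightarrow> 'a set \<Rightarrow> bool" where
  "galois_ext E K \<longleftrightarrow> is_subfield E \<and> is_subfield K \<and> E \<subseteq> K \<and>
     (\<forall>x\<in>K. \<exists>m. is_min_poly E x m \<and> (\<forall>y. poly m y = 0 \<longrightarrow> y \<in> K \<and> order y m = 1))"

end

theory Submission
  imports Defs
begin


definition hom_on :: "'a::field set \<Rightarrow> ('a \<Rightarrow> 'a) \<Rightarrow> bool" where
  "hom_on M t \<longleftrightarrow> (\<forall>a\<in>M. \<forall>b\<in>M. t (a + b) = t a + t b \<and> t (a * b) = t a * t b) \<and> t 1 = 1"

lemma subfieldD:
  assumes "is_subfield K"
  shows "0 \<in> K" "1 \<in> K" "x \<in> K \<Longrightarrow> y \<in> K \<Longrightarrow> x + y \<in> K"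
    "x \<in> K \<Longrightarrow> y \<in> K \<Longrightarrow> x * y \<in> K" "x \<in> K \<Longrightarrow> - x \<in> K" "x \<in> K \<Longrightarrow> inverse x \<in> K"
  using assms unfolding is_subfield_def by auto

lemma subfield_diff: "is_subfield K \<Longrightarrow> x \<in> K \<Longrightarrow> y \<in> K \<Longrightarrow> x - y \<in> K"
  using subfieldD[of K] by (metis diff_conv_add_uminus)

lemma subfield_div: "is_subfield K \<Longrightarrow> x \<in> K \<Longrightarrow> y \<in> K \<Longrightarrow> x / y \<in> K"
  using subfieldD[of K] by (metis divide_inverse)

lemma subfield_of_nat: "is_subfield K \<Longrightarrow> of_nat n \<in> K"
  by (induction n) (auto intro: subfieldD)

lemma subfield_sum: "is_subfield K \<Longrightarrow> (\<And>i. i \<in> I \<Longrightarrow> f i \<in> K) \<Longrightarrow> sum f I \<in> K"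
  by (induction I rule: infinite_finite_induct) (auto intro: subfieldD)

lemma subfield_power: "is_subfield K \<Longrightarrow> x \<in> K \<Longrightarrow> x ^ n \<in> K"
  by (induction n) (auto intro: subfieldD)

lemma subfield_UNIV: "is_subfield UNIV"
  unfolding is_subfield_def by auto

lemma field_gen_subfield: "is_subfield (field_gen E A)"
  unfolding field_gen_def is_subfield_def by auto

lemma field_gen_sup: "E \<subseteq> field_gen E A" "A \<subseteq> field_gen E A"
  unfolding field_gen_def by auto

lemma field_gen_least: "is_subfield K \<Longrightarrow> E \<subseteq> K \<Longrightarrow> A \<subseteq> K \<Longrightarrow> field_gen E A \<subseteq> K"
  unfolding field_gen_def by auto

lemma field_gen_mono: "A \<subseteq> B \<Longrightarrow> field_gen E A \<subseteq> field_gen E B"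
  unfolding field_gen_def by auto

section \<open>Polynomials over a subset\<close>


lemma poly_over_pCons: "poly_over K (pCons a P) \<longleftrightarrow> a \<in> K \<and> poly_over K P"
  unfolding poly_over_def by (auto simp: coeff_pCons split: nat.splits)

context fixes K :: "'a::field set" assumes K: "is_subfield K"
begin

lemma po_0: "poly_over K 0" using subfieldD[OF K] by (simp add: poly_over_def)
lemma po_const: "a \<in> K \<Longrightarrow> poly_over K [:a:]"
  using subfieldD[OF K] by (simp add: poly_over_def coeff_pCons split: nat.splits)
lemma po_one: "poly_over K 1"
  using subfieldD[OF K] by (simp add: poly_over_def coeff_pCons one_pCons split: nat.splits)
lemma po_X: "poly_over K [:0,1:]"
  using subfieldD[OF K] by (simp add: poly_over_def coeff_pCons split: nat.splits)
lemma po_monom: "a \<in> K \<Longrightarrow> poly_over K (monom a n)"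
  using subfieldD[OF K] by (simp add: poly_over_def coeff_monom)
lemma po_add: "poly_over K P \<Longrightarrow> poly_over K Q \<Longrightarrow> poly_over K (P + Q)"
  using subfieldD[OF K] by (simp add: poly_over_def)
lemma po_uminus: "poly_over K P \<Longrightarrow> poly_over K (- P)"
  using subfieldD[OF K] by (simp add: poly_over_def)
lemma po_diff: "poly_over K P \<Longrightarrow> poly_over K Q \<Longrightarrow> poly_over K (P - Q)"
  using subfield_diff[OF K] by (simp add: poly_over_def)
lemma po_smult: "a \<in> K \<Longrightarrow> poly_over K P \<Longrightarrow> poly_over K (smult a P)"
  using subfieldD[OF K] by (simp add: poly_over_def)
lemma po_mult: "poly_over K P \<Longrightarrow> poly_over K Q \<Longrightarrow> poly_over K (P * Q)"
  unfolding poly_over_def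
  by (intro allI coeff_mult_semiring_closed) (use subfieldD[OF K] in auto)
lemma po_power: "poly_over K P \<Longrightarrow> poly_over K (P ^ n)"
  by (induction n) (auto intro: po_mult po_one)
lemma po_pcompose: "poly_over K P \<Longrightarrow> poly_over K Q \<Longrightarrow> poly_over K (pcompose P Q)"
  unfolding poly_over_def
  by (intro allI coeff_pcompose_semiring_closed) (use subfieldD[OF K] in auto)
lemma po_pderiv: "poly_over K P \<Longrightarrow> poly_over K (pderiv P)"
  unfolding poly_over_def by (auto simp: coeff_pderiv intro!: subfieldD[OF K] subfield_of_nat[OF K])
lemma po_mono: "poly_over K P \<Longrightarrow> K \<subseteq> L \<Longrightarrow> poly_over L P"
  unfolding poly_over_def by auto
lemma po_poly: "poly_over K P \<Longrightarrow> x \<in> K \<Longrightarrow> poly P x \<in> K"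
  by (induction P) (auto simp: poly_over_pCons intro!: subfieldD[OF K])

lemma po_div:
  assumes q: "poly_over K q" "lead_coeff q = 1" and D: "poly_over K D"
  shows "\<exists>Q R. poly_over K Q \<and> poly_over K R \<and> D = q * Q + R \<and> (R = 0 \<or> degree R < degree q)"
  using D
proof (induction "degree D" arbitrary: D rule: less_induct)
  case less
  show ?case
  proof (cases "D = 0 \<or> degree D < degree q")
    case True
    then show ?thesis using less.prems po_0 by (intro exI[of _ 0] exI[of _ D]) auto
  next
    case False
    define k where "k = degree D - degree q"
    define c where "c = lead_coeff D"
    define D' where "D' = D - smult c (monom 1 k * q)"
    have cK: "c \<in> K" using less.prems unfolding c_def poly_over_def by auto
    have D'K: "poly_over K D'" unfolding D'_def
      by (intro po_diff po_smult po_mult po_monom less.prems cK q subfieldD[OF K])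
    have co: "coeff D' i = 0" if "i \<ge> degree D" for i
    proof (cases "i = degree D")
      case True
      then show ?thesis using False q(2) unfolding D'_def c_def k_def
        by (simp add: coeff_monom_mult)
    next
      case F: False
      then have "i > degree D" using that by auto
      then have "coeff D i = 0" "coeff q (i - k) = 0" using False unfolding k_def
        by (auto intro: coeff_eq_0)
      then show ?thesis unfolding D'_def by (simp add: coeff_monom_mult)
    qed
    show ?thesis
    proof (cases "D' = 0")
      case True
      have "D = q * smult c (monom 1 k) + 0" using True unfolding D'_def by (simp add: algebra_simps)
      moreover have "poly_over K (smult c (monom 1 k))" by (intro po_smult po_monom cK subfieldD[OF K])
      ultimately show ?thesis using po_0 by blast
    next
      case F: False
      have "degree D' < degree D"
      proof (rule ccontr)
        assume "\<not> ?thesis"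
        then have "coeff D' (degree D') = 0" using co by auto
        then show False using F by simp
      qed
      from less.hyps[OF this D'K] obtain Q R where QR: "poly_over K Q" "poly_over K R"
        "D' = q * Q + R" "R = 0 \<or> degree R < degree q" by blast
      have "D = q * (Q + smult c (monom 1 k)) + R" using QR(3) unfolding D'_def
        by (simp add: algebra_simps eq_diff_eq)
      moreover have "poly_over K (Q + smult c (monom 1 k))"
        by (intro po_add QR po_smult po_monom cK subfieldD[OF K])
      ultimately show ?thesis using QR by blast
    qed
  qed
qed

end


section \<open>Minimal polynomials\<close>

lemma minpoly_exists:
  assumes K: "is_subfield K" and P: "P \<noteq> 0" "poly_over K P" "poly P x = 0"
  shows "\<exists>m. is_min_poly K x m"
proof -
  define n where "n = (LEAST n. \<exists>P. P \<noteq> 0 \<and> poly_over K P \<and> poly P x = 0 \<and> degree P = n)"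
  have "\<exists>P. P \<noteq> 0 \<and> poly_over K P \<and> poly P x = 0 \<and> degree P = n"
    unfolding n_def by (rule LeastI_ex) (use P in blast)
  then obtain Q where Q: "Q \<noteq> 0" "poly_over K Q" "poly Q x = 0" "degree Q = n" by blast
  have min: "n \<le> degree R" if "R \<noteq> 0" "poly_over K R" "poly R x = 0" for R
    unfolding n_def by (rule Least_le) (use that in blast)
  define m where "m = smult (inverse (lead_coeff Q)) Q"
  have lc: "lead_coeff Q \<in> K" using Q(2) unfolding poly_over_def by auto
  have "is_min_poly K x m"
    unfolding is_min_poly_def m_def using Q min
    by (auto intro!: po_smult[OF K] subfieldD[OF K] lc)
  then show ?thesis by blast
qed

lemma minpoly_deg: "is_min_poly K x m \<Longrightarrow> degree m \<ge> 1"
proof (rule ccontr)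
  assume a: "is_min_poly K x m" "\<not> 1 \<le> degree m"
  then have "degree m = 0" by auto
  then have "m = [:1:]" using a(1) unfolding is_min_poly_def by (metis degree_eq_zeroE lead_coeff_pCons(2))
  then show False using a(1) unfolding is_min_poly_def by simp
qed

lemma minpoly_dvd:
  assumes K: "is_subfield K" and m: "is_min_poly K x m" and D: "poly_over K D" "poly D x = 0"
  shows "\<exists>Q. poly_over K Q \<and> D = m * Q"
proof -
  have mK: "poly_over K m" "lead_coeff m = 1" using m unfolding is_min_poly_def by auto
  obtain Q R where QR: "poly_over K Q" "poly_over K R" "D = m * Q + R" "R = 0 \<or> degree R < degree m"
    using po_div[OF K mK D(1)] by blast
  have "poly R x = 0" using D(2) QR(3) m unfolding is_min_poly_def by simp
  then have "R = 0" using QR m unfolding is_min_poly_def by (meson not_le)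
  then show ?thesis using QR by auto
qed

lemma minpoly_conj:
  assumes K: "is_subfield K" and m: "is_min_poly K x m" and y: "poly m y = 0"
    and alg: "\<exists>P. P \<noteq> 0 \<and> poly_over K P \<and> poly P y = 0"
  shows "is_min_poly K y m"
proof -
  obtain my where my: "is_min_poly K y my" using minpoly_exists[OF K] alg by blast
  have mK: "poly_over K m" "m \<noteq> 0" using m unfolding is_min_poly_def by auto
  obtain Q where Q: "poly_over K Q" "m = my * Q" using minpoly_dvd[OF K my mK(1) y] by blast
  have "Q \<noteq> 0" "my \<noteq> 0" using Q mK by auto
  have dm: "degree m = degree my + degree Q" using Q \<open>Q \<noteq> 0\<close> \<open>my \<noteq> 0\<close> by (simp add: degree_mult_eq)
  have "poly my x = 0"
  proof (rule ccontr)
    assume "poly my x \<noteq> 0"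
    then have "poly Q x = 0" using m Q unfolding is_min_poly_def by auto
    then have "degree m \<le> degree Q" using m Q \<open>Q \<noteq> 0\<close> unfolding is_min_poly_def by auto
    then show False using dm minpoly_deg[OF my] by auto
  qed
  then have "degree m \<le> degree my" using m my unfolding is_min_poly_def by auto
  then show ?thesis using my m y unfolding is_min_poly_def by (meson order_trans)
qed

lemma minpoly_sep:
  fixes m :: "'a::field_char_0 poly"
  assumes K: "is_subfield K" and m: "is_min_poly K y m"
  shows "order y m = 1"
proof -
  have m0: "m \<noteq> 0" "poly m y = 0" "poly_over K m" using m unfolding is_min_poly_def by auto
  have d: "degree m \<ge> 1" using minpoly_deg[OF m] .
  have "order y (pderiv m) = 0"
  proof (rule ccontr)
    assume "order y (pderiv m) \<noteq> 0"
    then have "poly (pderiv m) y = 0" by (simp add: order_root)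
    moreover have "pderiv m \<noteq> 0" using d by (simp add: pderiv_eq_0_iff)
    ultimately have "degree m \<le> degree (pderiv m)"
      using m po_pderiv[OF K m0(3)] unfolding is_min_poly_def by auto
    then show False using d by (simp add: degree_pderiv)
  qed
  then show ?thesis using order_pderiv[OF m0(1,2)] by simp
qed


section \<open>Homomorphisms on subfields\<close>

context fixes M :: "'a::field set" and t :: "'a \<Rightarrow> 'a"
  assumes M: "is_subfield M" and h: "hom_on M t"
begin

lemma h_add: "a \<in> M \<Longrightarrow> b \<in> M \<Longrightarrow> t (a + b) = t a + t b" using h unfolding hom_on_def by auto
lemma h_mult: "a \<in> M \<Longrightarrow> b \<in> M \<Longrightarrow> t (a * b) = t a * t b" using h unfolding hom_on_def by auto
lemma h_one: "t 1 = 1" using h unfolding hom_on_def by auto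
lemma h_zero: "t 0 = 0"
proof -
  have "t 0 + t 0 = t 0 + 0" using h_add[of 0 0] subfieldD[OF M] by simp
  then show ?thesis by (rule add_left_imp_eq)
qed
lemma h_uminus: "a \<in> M \<Longrightarrow> t (- a) = - t a"
proof -
  assume a: "a \<in> M"
  have "t a + t (- a) = 0" using h_add[of a "-a"] a subfieldD[OF M] h_zero by simp
  then show ?thesis by (metis add.commute add_eq_0_iff)
qed
lemma h_diff: "a \<in> M \<Longrightarrow> b \<in> M \<Longrightarrow> t (a - b) = t a - t b"
  using h_add[of a "-b"] h_uminus[of b] subfieldD[OF M] by simp
lemma h_sum: "(\<And>i. i \<in> I \<Longrightarrow> f i \<in> M) \<Longrightarrow> t (sum f I) = (\<Sum>i\<in>I. t (f i))"
  by (induction I rule: infinite_finite_induct) (auto simp: h_zero h_add subfield_sum[OF M])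
lemma h_power: "a \<in> M \<Longrightarrow> t (a ^ n) = t a ^ n"
  by (induction n) (auto simp: h_one h_mult subfield_power[OF M])
lemma h_inverse: "a \<in> M \<Longrightarrow> t (inverse a) = inverse (t a)"
proof (cases "a = 0")
  case True then show ?thesis by (simp add: h_zero)
next
  case False
  assume a: "a \<in> M"
  have "t a * t (inverse a) = 1" using h_mult[of a "inverse a"] a subfieldD[OF M] False h_one by simp
  then show ?thesis by (metis inverse_unique)
qed

lemma h_poly: "poly_over M P \<Longrightarrow> w \<in> M \<Longrightarrow> t (poly P w) = poly (map_poly t P) (t w)"
proof (induction P)
  case 0 then show ?case by (simp add: h_zero)
next
  case (pCons a P)
  then have aP: "a \<in> M" "poly_over M P" by (auto simp: poly_over_pCons)
  have "t (poly (pCons a P) w) = t a + t w * t (poly P w)"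
    using aP pCons.prems by (simp add: h_add h_mult po_poly[OF M] subfieldD[OF M])
  then show ?case using pCons aP by (simp add: map_poly_pCons h_zero)
qed

lemma map_add: "poly_over M P \<Longrightarrow> poly_over M Q \<Longrightarrow> map_poly t (P + Q) = map_poly t P + map_poly t Q"
  by (rule poly_eqI) (simp add: coeff_map_poly h_zero h_add poly_over_def)
lemma map_diff: "poly_over M P \<Longrightarrow> poly_over M Q \<Longrightarrow> map_poly t (P - Q) = map_poly t P - map_poly t Q"
  by (rule poly_eqI) (simp add: coeff_map_poly h_zero h_diff poly_over_def)
lemma map_mult: "poly_over M P \<Longrightarrow> poly_over M Q \<Longrightarrow> map_poly t (P * Q) = map_poly t P * map_poly t Q"
  by (rule poly_eqI) (simp add: coeff_map_poly h_zero coeff_mult h_sum h_mult poly_over_def subfieldD[OF M])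

end

lemma map_fix: "(\<forall>e\<in>E. t e = e) \<Longrightarrow> t 0 = 0 \<Longrightarrow> poly_over E P \<Longrightarrow> map_poly t P = P"
  by (rule poly_eqI) (simp add: coeff_map_poly poly_over_def)


section \<open>Extending a homomorphism by one algebraic element\<close>

lemma ext_step:
  fixes M :: "'a::field set"
  assumes M: "is_subfield M" and h: "hom_on M \<tau>"
    and alg: "\<And>w. \<exists>P. P \<noteq> 0 \<and> poly_over M P \<and> poly P w = 0"
    and q: "is_min_poly M t q" and s: "poly (map_poly \<tau> q) s = 0"
  shows "\<exists>M' \<tau>'. is_subfield M' \<and> M \<subseteq> M' \<and> t \<in> M' \<and> hom_on M' \<tau>' \<and> (\<forall>a\<in>M. \<tau>' a = \<tau> a) \<and> \<tau>' t = s"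
proof -
  define M' where "M' = (\<lambda>P. poly P t) ` {P. poly_over M P}"
  define rep where "rep w = (SOME P. poly_over M P \<and> poly P t = w)" for w
  define \<tau>' where "\<tau>' w = poly (map_poly \<tau> (rep w)) s" for w
  have qM: "poly_over M q" using q unfolding is_min_poly_def by auto
  have Z: "poly (map_poly \<tau> D) s = 0" if D: "poly_over M D" "poly D t = 0" for D
  proof -
    obtain Q where Q: "poly_over M Q" "D = q * Q" using minpoly_dvd[OF M q D] by blast
    then show ?thesis using map_mult[OF M h qM Q(1)] s by simp
  qed
  have V: "\<tau>' (poly P t) = poly (map_poly \<tau> P) s" if P: "poly_over M P" for P
  proof -
    have "\<exists>R. poly_over M R \<and> poly R t = poly P t" using P by blast
    then have R: "poly_over M (rep (poly P t))" "poly (rep (poly P t)) t = poly P t"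
      unfolding rep_def by (metis (mono_tags, lifting) someI_ex)+
    have "poly (map_poly \<tau> (rep (poly P t) - P)) s = 0"
      by (rule Z) (use R P po_diff[OF M] in auto)
    then show ?thesis unfolding \<tau>'_def using map_diff[OF M h R(1) P] by simp
  qed
  have M'I: "poly P t \<in> M'" if "poly_over M P" for P using that unfolding M'_def by auto
  have M'E: "\<exists>P. poly_over M P \<and> w = poly P t" if "w \<in> M'" for w using that unfolding M'_def by auto
  have inv: "inverse w \<in> M'" if w: "w \<in> M'" for w
  proof (cases "w = 0")
    case True then show ?thesis using M'I[OF po_0[OF M]] by simp
  next
    case False
    obtain P where P: "poly_over M P" "w = poly P t" using M'E[OF w] by blast
    obtain c where c: "is_min_poly M w c" using minpoly_exists[OF M] alg by blast
    obtain c0 c' where cc: "c = pCons c0 c'" by (cases c) auto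
    have cM: "c0 \<in> M" "poly_over M c'" using c cc unfolding is_min_poly_def by (auto simp: poly_over_pCons)
    have pc: "c0 + w * poly c' w = 0" using c cc unfolding is_min_poly_def by simp
    have "c0 \<noteq> 0"
    proof
      assume c00: "c0 = 0"
      then have "poly c' w = 0" using pc False by simp
      moreover have "c' \<noteq> 0" using c cc c00 unfolding is_min_poly_def by auto
      ultimately have "degree c \<le> degree c'" using c cM unfolding is_min_poly_def by auto
      then show False using cc \<open>c' \<noteq> 0\<close> by simp
    qed
    then have "inverse w = poly (smult (- inverse c0) (pcompose c' P)) t"
      using pc False P(2) by (simp add: poly_pcompose field_simps eq_neg_iff_add_eq_0)
    then show ?thesis
      by (metis M'I P(1) cM subfieldD(5,6)[OF M] po_smult[OF M] po_pcompose[OF M])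
  qed
  have sub: "is_subfield M'"
    unfolding is_subfield_def
  proof (intro conjI ballI)
    show "0 \<in> M'" using M'I[OF po_0[OF M]] by simp
    show "1 \<in> M'" using M'I[OF po_one[OF M]] by simp
    fix x y assume "x \<in> M'" "y \<in> M'"
    then obtain P Q where "poly_over M P" "x = poly P t" "poly_over M Q" "y = poly Q t" using M'E by metis
    then show "x + y \<in> M'" "x * y \<in> M'" "- x \<in> M'"
      using M'I po_add[OF M] po_mult[OF M] po_uminus[OF M] by (metis poly_add poly_mult poly_minus)+
  next
    fix x assume "x \<in> M'" then show "inverse x \<in> M'" by (rule inv)
  qed
  have hom: "hom_on M' \<tau>'"
    unfolding hom_on_def
  proof (intro conjI ballI)
    fix x y assume "x \<in> M'" "y \<in> M'"
    then obtain P Q where PQ: "poly_over M P" "x = poly P t" "poly_over M Q" "y = poly Q t" using M'E by metis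
    have "\<tau>' (x + y) = \<tau>' (poly (P + Q) t)" using PQ by simp
    also have "\<dots> = \<tau>' x + \<tau>' y" using PQ V[of "P+Q"] V[of P] V[of Q] po_add[OF M] map_add[OF M h] by simp
    finally show "\<tau>' (x + y) = \<tau>' x + \<tau>' y" .
    have "\<tau>' (x * y) = \<tau>' (poly (P * Q) t)" using PQ by simp
    also have "\<dots> = \<tau>' x * \<tau>' y" using PQ V[of "P*Q"] V[of P] V[of Q] po_mult[OF M] map_mult[OF M h] by simp
    finally show "\<tau>' (x * y) = \<tau>' x * \<tau>' y" .
  next
    show "\<tau>' 1 = 1" using V[OF po_one[OF M]] h_one[OF M h] by simp
  qed
  have ext: "\<tau>' a = \<tau> a" if "a \<in> M" for a
    using V[OF po_const[OF M that]] h_zero[OF M h] by (simp add: map_poly_pCons)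
  have "\<tau>' t = s" using V[OF po_X[OF M]] h_zero[OF M h] h_one[OF M h] by (simp add: map_poly_pCons)
  moreover have "M \<subseteq> M'" proof
    fix a assume "a \<in> M" then show "a \<in> M'" using M'I[OF po_const[OF M, of a]] by simp
  qed
  moreover have "t \<in> M'" using M'I[OF po_X[OF M]] by simp
  ultimately show ?thesis using sub hom ext by blast
qed




section \<open>The valued field\<close>

locale qpb =
  fixes p :: nat and av :: "'a::field_char_0 \<Rightarrow> real"
  assumes qp: "is_Qp_bar p av"
begin

lemma av_nonneg: "av x \<ge> 0" using qp unfolding is_Qp_bar_def by auto
lemma av_eq0: "av x = 0 \<longleftrightarrow> x = 0" using qp unfolding is_Qp_bar_def by auto
lemma av_mult: "av (x * y) = av x * av y" using qp unfolding is_Qp_bar_def by auto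
lemma av_ultra: "av (x + y) \<le> max (av x) (av y)" using qp unfolding is_Qp_bar_def by auto
lemma av_ratcomplete: fixes f :: "nat \<Rightarrow> rat"
  shows "(\<forall>e>0. \<exists>N. \<forall>m\<ge>N. \<forall>k\<ge>N. av (of_rat (f m) - of_rat (f k)) < e) \<Longrightarrow>
        (\<exists>x::'a. \<forall>e>0. \<exists>N. \<forall>m\<ge>N. av (of_rat (f m) - x) < e)" using qp unfolding is_Qp_bar_def by blast
lemma av_algclosed: "degree (P::'a poly) > 0 \<Longrightarrow> \<exists>x. poly P x = 0" using qp unfolding is_Qp_bar_def by blast
lemma av_alg: "\<exists>P. P \<noteq> 0 \<and> poly_over (Qp_in av) P \<and> poly P x = 0" using qp unfolding is_Qp_bar_def by auto

lemma av_0[simp]: "av 0 = 0" using av_eq0 by simp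
lemma av_1[simp]: "av 1 = 1"
proof -
  have "av 1 = av 1 * av 1" using av_mult[of 1 1] by simp
  moreover have "av 1 \<noteq> 0" using av_eq0 by simp
  ultimately show ?thesis by simp
qed
lemma av_uminus[simp]: "av (- x) = av x"
proof -
  have "av (-1) * av (-1) = 1" using av_mult[of "-1" "-1"] by simp
  then have "(av (-1) - 1) * (av (-1) + 1) = 0" by (simp add: algebra_simps)
  moreover have "av (-1) + 1 > 0" using av_nonneg[of "-1"] by simp
  ultimately have "av (-1) = 1" by simp
  then show ?thesis using av_mult[of "-1" x] by simp
qed
lemma av_sym: "av (x - y) = av (y - x)" using av_uminus[of "x - y"] by simp
lemma av_inverse: "av (inverse x) = inverse (av x)"
proof (cases "x = 0")
  case False
  then have "av x * av (inverse x) = 1" using av_mult[of x "inverse x"] by simp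
  then show ?thesis by (metis inverse_unique)
qed simp
lemma av_divide: "av (x / y) = av x / av y"
  by (simp add: divide_inverse av_mult av_inverse)
lemma av_power: "av (x ^ n) = av x ^ n"
  by (induction n) (auto simp: av_mult)
lemma av_tri: "av (x - z) \<le> max (av (x - y)) (av (y - z))"
  using av_ultra[of "x - y" "y - z"] by simp
lemma av_add_le: "av x \<le> B \<Longrightarrow> av y \<le> B \<Longrightarrow> av (x + y) \<le> B"
  using av_ultra[of x y] by simp
lemma av_add_less: "av x < B \<Longrightarrow> av y < B \<Longrightarrow> av (x + y) < B"
  using av_ultra[of x y] by simp
lemma av_sum_le: "(\<And>i. i \<in> I \<Longrightarrow> av (f i) \<le> B) \<Longrightarrow> 0 \<le> B \<Longrightarrow> av (sum f I) \<le> B"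
  by (induction I rule: infinite_finite_induct) (auto intro!: av_add_le)

abbreviation "E \<equiv> Qp_in av"

lemma E_iff: "x \<in> E \<longleftrightarrow> (\<forall>e>0. \<exists>q::rat. av (x - of_rat q) < e)"
  unfolding Qp_in_def by simp

lemma rat_E: "of_rat q \<in> E"
  unfolding E_iff by (intro allI impI exI[of _ q]) simp

lemma E_subfield: "is_subfield E"
  unfolding is_subfield_def
proof (intro conjI ballI)
  show "0 \<in> E" using rat_E[of 0] by simp
  show "1 \<in> E" using rat_E[of 1] by simp
  fix x y assume x: "x \<in> E" and y: "y \<in> E"
  show "x + y \<in> E" unfolding E_iff
  proof (intro allI impI)
    fix e :: real assume "e > 0"
    obtain q r where "av (x - of_rat q) < e" "av (y - of_rat r) < e" using x y \<open>e>0\<close> unfolding E_iff by blast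
    then have "av ((x - of_rat q) + (y - of_rat r)) < e" by (rule av_add_less)
    then show "\<exists>q. av (x + y - of_rat q) < e" by (intro exI[of _ "q + r"]) (simp add: of_rat_add algebra_simps)
  qed
  show "x * y \<in> E" unfolding E_iff
  proof (intro allI impI)
    fix e :: real assume "e > 0"
    have "min 1 (e / (av x + 1)) > 0" using \<open>e>0\<close> av_nonneg[of x] by simp
    then obtain r where r: "av (y - of_rat r) < min 1 (e / (av x + 1))"
      using y unfolding E_iff by blast
    have "e / (av y + 2) > 0" using \<open>e>0\<close> av_nonneg[of y] by simp
    then obtain q where q: "av (x - of_rat q) < e / (av y + 2)"
      using x unfolding E_iff by blast
    have ar: "av (of_rat r) \<le> av y + 1"
      using av_ultra[of y "of_rat r - y"] r av_sym[of y "of_rat r"] av_nonneg[of y] by (auto simp: max_def split: if_splits)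
    have 1: "av (x * (y - of_rat r)) < e"
    proof -
      have "av (x * (y - of_rat r)) = av x * av (y - of_rat r)" by (simp add: av_mult)
      also have "\<dots> \<le> av x * (e / (av x + 1))" using r av_nonneg[of x] by (intro mult_left_mono) auto
      also have "\<dots> < e" using \<open>e>0\<close> av_nonneg[of x] by (simp add: field_simps)
      finally show ?thesis .
    qed
    have 2: "av ((x - of_rat q) * of_rat r) < e"
    proof -
      have "av ((x - of_rat q) * of_rat r) = av (x - of_rat q) * av (of_rat r)" by (simp add: av_mult)
      also have "\<dots> \<le> e / (av y + 2) * (av y + 1)" using q ar av_nonneg \<open>e / (av y + 2) > 0\<close> by (intro mult_mono) auto
      also have "\<dots> < e" using \<open>e>0\<close> av_nonneg[of y] by (simp add: field_simps)
      finally show ?thesis .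
    qed
    have "av (x * (y - of_rat r) + (x - of_rat q) * of_rat r) < e" using 1 2 by (rule av_add_less)
    then show "\<exists>q. av (x * y - of_rat q) < e" by (intro exI[of _ "q * r"]) (simp add: of_rat_mult algebra_simps)
  qed
  show "- x \<in> E" unfolding E_iff
  proof (intro allI impI)
    fix e :: real assume "e > 0"
    obtain q where "av (x - of_rat q) < e" using x \<open>e>0\<close> unfolding E_iff by blast
    moreover have "- x - of_rat (- q) = - (x - of_rat q)" by (simp add: of_rat_minus)
    ultimately have "av (- x - of_rat (- q)) < e" by (metis av_uminus)
    then show "\<exists>q. av (- x - of_rat q) < e" by blast
  qed
  show "inverse x \<in> E"
  proof (cases "x = 0")
    case True then show ?thesis using \<open>0 \<in> E\<close> by simp
  next
    case False
    then have a: "av x > 0" using av_eq0 av_nonneg by (metis order_le_less)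
    show ?thesis unfolding E_iff
    proof (intro allI impI)
      fix e :: real assume "e > 0"
      have "min (av x) (e * av x * av x) > 0" using \<open>e>0\<close> a by simp
      then obtain q where q: "av (x - of_rat q) < min (av x) (e * av x * av x)"
        using x unfolding E_iff by blast
      have aq: "av (of_rat q) = av x"
      proof (rule antisym)
        show "av (of_rat q) \<le> av x" using av_ultra[of x "of_rat q - x"] q av_sym[of x "of_rat q"] by auto
        show "av x \<le> av (of_rat q)"
        proof (rule ccontr)
          assume "\<not> ?thesis"
          then have "av (x - of_rat q + of_rat q) < av x" using q by (intro av_add_less) auto
          then show False by simp
        qed
      qed
      then have q0: "(of_rat q :: 'a) \<noteq> 0" using a by auto
      have "inverse x - of_rat (inverse q) = (of_rat q - x) / (x * of_rat q)"
        using q0 False by (simp only: of_rat_inverse) (simp add: field_simps)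
      then have "av (inverse x - of_rat (inverse q)) = av (x - of_rat q) / (av x * av x)"
        using aq by (simp add: av_divide av_mult av_sym)
      also have "\<dots> < e" using q a by (simp add: field_simps)
      finally show "\<exists>q. av (inverse x - of_rat q) < e" by blast
    qed
  qed
qed

end




context qpb
begin

definition conv :: "(nat \<Rightarrow> 'a) \<Rightarrow> 'a \<Rightarrow> bool" where
  "conv f x \<longleftrightarrow> (\<forall>e>0. \<exists>N. \<forall>m\<ge>N. av (f m - x) < e)"

definition cauchy :: "(nat \<Rightarrow> 'a) \<Rightarrow> bool" where
  "cauchy f \<longleftrightarrow> (\<forall>e>0. \<exists>N. \<forall>m\<ge>N. \<forall>k\<ge>N. av (f m - f k) < e)"

lemma inv_suc_small: "e > 0 \<Longrightarrow> \<exists>N. \<forall>m\<ge>N. inverse (real (Suc m)) < e"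
proof -
  assume "e > 0"
  then obtain N where N: "inverse (real (Suc N)) < e" using reals_Archimedean by blast
  have "inverse (real (Suc m)) < e" if "m \<ge> N" for m
  proof -
    have "inverse (real (Suc m)) \<le> inverse (real (Suc N))" using that by (simp add: field_simps)
    then show ?thesis using N by linarith
  qed
  then show ?thesis by blast
qed

lemma E_complete:
  assumes fE: "\<And>n. f n \<in> E" and c: "cauchy f"
  shows "\<exists>x\<in>E. conv f x"
proof -
  have "\<forall>n. \<exists>q. av (f n - of_rat q) < inverse (real (Suc n))"
    using fE unfolding E_iff by simp
  then obtain g where g: "\<And>n. av (f n - of_rat (g n)) < inverse (real (Suc n))" by metis
  have cg: "\<forall>e>0. \<exists>N. \<forall>m\<ge>N. \<forall>k\<ge>N. av (of_rat (g m) - of_rat (g k)) < e"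
  proof (intro allI impI)
    fix e :: real assume "e > 0"
    obtain N1 where N1: "\<And>m. m \<ge> N1 \<Longrightarrow> inverse (real (Suc m)) < e" using inv_suc_small[OF \<open>e>0\<close>] by blast
    obtain N2 where N2: "\<And>m k. m \<ge> N2 \<Longrightarrow> k \<ge> N2 \<Longrightarrow> av (f m - f k) < e" using c \<open>e>0\<close> unfolding cauchy_def by blast
    have "av (of_rat (g m) - of_rat (g k)) < e" if "m \<ge> max N1 N2" "k \<ge> max N1 N2" for m k
    proof -
      have "av (of_rat (g m) - of_rat (g k)) \<le> max (av (of_rat (g m) - f m)) (av (f m - of_rat (g k)))"
        by (rule av_tri)
      moreover have "av (f m - of_rat (g k)) \<le> max (av (f m - f k)) (av (f k - of_rat (g k)))"
        by (rule av_tri)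
      moreover have "av (of_rat (g m) - f m) < e" using g[of m] N1[of m] that av_sym[of "f m"] by auto
      moreover have "av (f k - of_rat (g k)) < e" using g[of k] N1[of k] that by auto
      moreover have "av (f m - f k) < e" using N2 that by auto
      ultimately show ?thesis by auto
    qed
    then show "\<exists>N. \<forall>m\<ge>N. \<forall>k\<ge>N. av (of_rat (g m) - of_rat (g k)) < e" by blast
  qed
  obtain x where x: "\<forall>e>0. \<exists>N. \<forall>m\<ge>N. av (of_rat (g m) - x) < e" using av_ratcomplete[OF cg] by blast
  have "conv f x" unfolding conv_def
  proof (intro allI impI)
    fix e :: real assume "e > 0"
    obtain N1 where N1: "\<And>m. m \<ge> N1 \<Longrightarrow> inverse (real (Suc m)) < e" using inv_suc_small[OF \<open>e>0\<close>] by blast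
    obtain N2 where N2: "\<And>m. m \<ge> N2 \<Longrightarrow> av (of_rat (g m) - x) < e" using x \<open>e>0\<close> by blast
    have "av (f m - x) < e" if "m \<ge> max N1 N2" for m
    proof -
      have "av (f m - x) \<le> max (av (f m - of_rat (g m))) (av (of_rat (g m) - x))" by (rule av_tri)
      then show ?thesis using g[of m] N1[of m] N2[of m] that by auto
    qed
    then show "\<exists>N. \<forall>m\<ge>N. av (f m - x) < e" by blast
  qed
  moreover have "x \<in> E" unfolding E_iff
  proof (intro allI impI)
    fix e :: real assume "e > 0"
    then obtain N where "\<forall>m\<ge>N. av (of_rat (g m) - x) < e" using x by blast
    then have "av (x - of_rat (g N)) < e" using av_sym[of x] by auto
    then show "\<exists>q. av (x - of_rat q) < e" by blast
  qed
  ultimately show ?thesis by blast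
qed

end




context qpb
begin

lemma min_const:
  assumes "finite I" "\<forall>j\<in>I. \<exists>c>0. \<forall>a. P a \<longrightarrow> c * av (a j) \<le> S a"
  shows "\<exists>c>0. \<forall>a. P a \<longrightarrow> (\<forall>j\<in>I. c * av (a j) \<le> S a)"
  using assms
proof (induction I rule: finite_induct)
  case empty then show ?case by (intro exI[of _ 1]) auto
next
  case (insert x F)
  obtain c1 where c1: "c1 > 0" "\<forall>a. P a \<longrightarrow> (\<forall>j\<in>F. c1 * av (a j) \<le> S a)" using insert by auto
  obtain c2 where c2: "c2 > 0" "\<forall>a. P a \<longrightarrow> c2 * av (a x) \<le> S a" using insert.prems by auto
  have "min c1 c2 * av (a j) \<le> S a" if "P a" "j \<in> insert x F" for a j
  proof -
    have m: "min c1 c2 * av (a j) \<le> c1 * av (a j)" "min c1 c2 * av (a j) \<le> c2 * av (a j)"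
      using av_nonneg by (auto intro: mult_right_mono)
    show ?thesis using that c1 c2 m by (metis insert_iff order_trans)
  qed
  then show ?case using c1 c2 by (intro exI[of _ "min c1 c2"]) auto
qed

lemma av_sum_less: "finite I \<Longrightarrow> (\<And>i. i \<in> I \<Longrightarrow> av (f i) < e) \<Longrightarrow> 0 < e \<Longrightarrow> av (sum f I) < e"
  by (induction I rule: finite_induct) (auto intro!: av_add_less)

lemma indep_bound:
  assumes "finite I"
    and "\<forall>a. (\<forall>i\<in>I. a i \<in> E) \<longrightarrow> (\<Sum>i\<in>I. a i * v i) = 0 \<longrightarrow> (\<forall>i\<in>I. a i = 0)"
  shows "\<exists>c>0. \<forall>a. (\<forall>i\<in>I. a i \<in> E) \<longrightarrow> (\<forall>i\<in>I. c * av (a i) \<le> av (\<Sum>i\<in>I. a i * v i))"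
  using assms
proof (induction "card I" arbitrary: I rule: less_induct)
  case less
  note fin = less.prems(1) and ind = less.prems(2)
  have "\<forall>j\<in>I. \<exists>c>0. \<forall>a. (\<forall>i\<in>I. a i \<in> E) \<longrightarrow> c * av (a j) \<le> av (\<Sum>i\<in>I. a i * v i)"
  proof
    fix j assume j: "j \<in> I"
    define J where "J = I - {j}"
    have finJ: "finite J" using fin unfolding J_def by auto
    have cJ: "card J < card I" using fin j unfolding J_def by (meson card_Diff1_less)
    have sumI: "(\<Sum>i\<in>I. a i * v i) = a j * v j + (\<Sum>i\<in>J. a i * v i)" for a
      unfolding J_def using fin j by (simp add: sum.remove)
    have indJ: "\<forall>a. (\<forall>i\<in>J. a i \<in> E) \<longrightarrow> (\<Sum>i\<in>J. a i * v i) = 0 \<longrightarrow> (\<forall>i\<in>J. a i = 0)"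
    proof (intro allI impI ballI)
      fix a i assume aE: "\<forall>i\<in>J. a i \<in> E" and s0: "(\<Sum>i\<in>J. a i * v i) = 0" and i: "i \<in> J"
      define a' where "a' = a(j := 0)"
      have "(\<Sum>i\<in>J. a' i * v i) = (\<Sum>i\<in>J. a i * v i)" unfolding a'_def J_def by (intro sum.cong) auto
      then have "(\<Sum>i\<in>I. a' i * v i) = 0" using sumI[of a'] s0 unfolding a'_def by simp
      moreover have "\<forall>i\<in>I. a' i \<in> E" using aE subfieldD(1)[OF E_subfield] unfolding a'_def J_def by auto
      ultimately have "a' i = 0" using ind i unfolding J_def by auto
      then show "a i = 0" using i unfolding a'_def J_def by auto
    qed
    obtain c' where c': "c' > 0" "\<forall>a. (\<forall>i\<in>J. a i \<in> E) \<longrightarrow> (\<forall>i\<in>J. c' * av (a i) \<le> av (\<Sum>i\<in>J. a i * v i))"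
      using less.hyps[OF cJ finJ indJ] by blast
    show "\<exists>c>0. \<forall>a. (\<forall>i\<in>I. a i \<in> E) \<longrightarrow> c * av (a j) \<le> av (\<Sum>i\<in>I. a i * v i)"
    proof (rule ccontr)
      assume "\<not> ?thesis"
      then have "\<forall>n. \<exists>a. (\<forall>i\<in>I. a i \<in> E) \<and> inverse (real (Suc n)) * av (a j) > av (\<Sum>i\<in>I. a i * v i)"
        by (metis not_le of_nat_0_less_iff positive_imp_inverse_positive zero_less_Suc)
      then obtain A where A: "\<And>n. \<forall>i\<in>I. A n i \<in> E"
        "\<And>n. inverse (real (Suc n)) * av (A n j) > av (\<Sum>i\<in>I. A n i * v i)" by metis
      have Aj: "A n j \<noteq> 0" for n
      proof
        assume "A n j = 0" then show False using A(2)[of n] av_nonneg[of "\<Sum>i\<in>I. A n i * v i"] by simp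
      qed
      define B where "B n i = A n i / A n j" for n i
      define S where "S n = (\<Sum>i\<in>I. B n i * v i)" for n
      have BE: "B n i \<in> E" if "i \<in> I" for n i
        unfolding B_def using A(1) that j by (auto intro: subfield_div[OF E_subfield])
      have Bj: "B n j = 1" for n unfolding B_def using Aj by simp
      have S: "av (S n) < inverse (real (Suc n))" for n
      proof -
        have "S n = (\<Sum>i\<in>I. A n i * v i) / A n j" unfolding S_def B_def
          by (simp add: sum_divide_distrib)
        then have "av (S n) = av (\<Sum>i\<in>I. A n i * v i) / av (A n j)" by (simp add: av_divide)
        moreover have "av (A n j) > 0" using Aj av_nonneg av_eq0 by (metis order_le_less)
        ultimately have "av (S n) * av (A n j) < inverse (real (Suc n)) * av (A n j)"
          using A(2)[of n] by simp
        then show ?thesis using \<open>av (A n j) > 0\<close> by (simp only: mult_less_cancel_right_pos)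
      qed
      have diff: "(\<Sum>i\<in>J. (B n i - B m i) * v i) = S n - S m" for n m
        unfolding S_def sumI Bj by (simp add: sum_subtractf left_diff_distrib)
      have cauchyB: "cauchy (\<lambda>n. B n i)" if i: "i \<in> J" for i
        unfolding cauchy_def
      proof (intro allI impI)
        fix e :: real assume "e > 0"
        then obtain N where N: "\<And>m. m \<ge> N \<Longrightarrow> inverse (real (Suc m)) < c' * e"
          using inv_suc_small[of "c' * e"] c'(1) by auto
        have "av (B n i - B m i) < e" if "n \<ge> N" "m \<ge> N" for n m
        proof -
          have "c' * av (B n i - B m i) \<le> av (S n - S m)"
            using c'(2)[rule_format, of "\<lambda>i. B n i - B m i"] i BE subfield_diff[OF E_subfield] diff
            unfolding J_def by auto
          also have "\<dots> \<le> max (av (S n)) (av (S m))" using av_ultra[of "S n" "- S m"] by simp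
          also have "\<dots> < c' * e" using S[of n] S[of m] N[of n] N[of m] that by (simp del: of_nat_Suc)
          finally show ?thesis using c'(1) by simp
        qed
        then show "\<exists>N. \<forall>n\<ge>N. \<forall>m\<ge>N. av (B n i - B m i) < e" by blast
      qed
      have "\<forall>i\<in>J. \<exists>x\<in>E. conv (\<lambda>n. B n i) x"
        using E_complete cauchyB BE unfolding J_def by auto
      then obtain \<beta> where \<beta>: "\<And>i. i \<in> J \<Longrightarrow> \<beta> i \<in> E" "\<And>i. i \<in> J \<Longrightarrow> conv (\<lambda>n. B n i) (\<beta> i)"
        by metis
      define \<beta>' where "\<beta>' = \<beta>(j := 1)"
      define Vb where "Vb = 1 + (\<Sum>i\<in>I. av (v i))"
      have Vb: "Vb > 0" "av (v i) \<le> Vb" if "i \<in> I" for i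
      proof -
        have "av (v i) \<le> (\<Sum>i\<in>I. av (v i))" using fin that av_nonneg by (intro member_le_sum) auto
        moreover have "(\<Sum>i\<in>I. av (v i)) \<ge> 0" using av_nonneg by (simp add: sum_nonneg)
        ultimately show "Vb > 0" "av (v i) \<le> Vb" unfolding Vb_def by auto
      qed
      have small: "av (\<Sum>i\<in>I. \<beta>' i * v i) < e" if "e > 0" for e
      proof -
        have ev1: "\<forall>i\<in>J. eventually (\<lambda>n. av (B n i - \<beta> i) < e / Vb) sequentially"
        proof
          fix i assume "i \<in> J"
          moreover have "e / Vb > 0" using that Vb j by auto
          ultimately obtain N where "\<forall>m\<ge>N. av (B m i - \<beta> i) < e / Vb" using \<beta>(2) unfolding conv_def by blast
          then show "eventually (\<lambda>n. av (B n i - \<beta> i) < e / Vb) sequentially"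
            unfolding eventually_sequentially by blast
        qed
        have "eventually (\<lambda>n. \<forall>i\<in>J. av (B n i - \<beta> i) < e / Vb) sequentially"
          using eventually_ball_finite[OF finJ ev1] .
        moreover have "eventually (\<lambda>n. inverse (real (Suc n)) < e) sequentially"
          using inv_suc_small[OF that] unfolding eventually_sequentially by blast
        ultimately have "eventually (\<lambda>n. (\<forall>i\<in>J. av (B n i - \<beta> i) < e / Vb) \<and> inverse (real (Suc n)) < e) sequentially"
          by (rule eventually_conj)
        then obtain n where n: "\<forall>i\<in>J. av (B n i - \<beta> i) < e / Vb" "inverse (real (Suc n)) < e"
          unfolding eventually_sequentially by auto
        have split: "(\<Sum>i\<in>I. \<beta>' i * v i) = (\<Sum>i\<in>I. (\<beta>' i - B n i) * v i) + S n"
          unfolding S_def by (simp add: sum_subtractf left_diff_distrib)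
        have t: "av ((\<beta>' i - B n i) * v i) < e" if i: "i \<in> I" for i
        proof (cases "i = j")
          case True then show ?thesis using Bj \<open>e>0\<close> unfolding \<beta>'_def by simp
        next
          case False
          then have iJ: "i \<in> J" using i unfolding J_def by auto
          have "av ((\<beta>' i - B n i) * v i) = av (B n i - \<beta> i) * av (v i)"
            using False unfolding \<beta>'_def by (simp add: av_mult av_sym)
          also have "\<dots> \<le> av (B n i - \<beta> i) * Vb" using Vb(2)[OF i] av_nonneg by (intro mult_left_mono) auto
          also have "\<dots> < e / Vb * Vb" using n(1) iJ Vb(1)[OF i] by (intro mult_strict_right_mono) auto
          also have "\<dots> = e" using Vb(1)[OF i] by simp
          finally show ?thesis .
        qed
        have "av (\<Sum>i\<in>I. (\<beta>' i - B n i) * v i) < e" using av_sum_less[OF fin t \<open>e>0\<close>] by simp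
        moreover have "av (S n) < e" using S[of n] n(2) by simp
        ultimately show ?thesis unfolding split by (intro av_add_less)
      qed
      have "av (\<Sum>i\<in>I. \<beta>' i * v i) = 0"
      proof (rule ccontr)
        assume "av (\<Sum>i\<in>I. \<beta>' i * v i) \<noteq> 0"
        then have "av (\<Sum>i\<in>I. \<beta>' i * v i) > 0" using av_nonneg by (metis order_le_less)
        then show False using small by fastforce
      qed
      then have "(\<Sum>i\<in>I. \<beta>' i * v i) = 0" using av_eq0 by simp
      moreover have "\<forall>i\<in>I. \<beta>' i \<in> E" using \<beta>(1) subfieldD(2)[OF E_subfield] unfolding \<beta>'_def J_def by auto
      ultimately have "\<beta>' j = 0" using ind j by blast
      then show False unfolding \<beta>'_def by simp
    qed
  qed
  then show ?case by (rule min_const[OF fin])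
qed

end




lemma poly_as_sum:
  fixes R :: "'a::comm_ring_1 poly"
  assumes "R = 0 \<or> degree R < d"
  shows "poly R z = (\<Sum>i<d. coeff R i * z ^ i)"
proof (cases "R = 0")
  case True then show ?thesis by simp
next
  case False
  then have dR: "degree R < d" using assms by auto
  have "poly R z = (\<Sum>i\<le>degree R. coeff R i * z ^ i)" by (simp add: poly_altdef)
  also have "\<dots> = (\<Sum>i<d. coeff R i * z ^ i)"
    using dR by (intro sum.mono_neutral_left) (auto simp: coeff_eq_0)
  finally show ?thesis .
qed

context qpb
begin

lemma minpoly_indep:
  assumes m: "is_min_poly E x m"
  shows "\<forall>a. (\<forall>i\<in>{..<degree m}. a i \<in> E) \<longrightarrow> (\<Sum>i\<in>{..<degree m}. a i * x ^ i) = 0 \<longrightarrow> (\<forall>i\<in>{..<degree m}. a i = 0)"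
proof (intro allI impI ballI)
  fix a k assume aE: "\<forall>i\<in>{..<degree m}. a i \<in> E" and s: "(\<Sum>i\<in>{..<degree m}. a i * x ^ i) = 0"
    and k: "k \<in> {..<degree m}"
  define d where "d = degree m"
  have d1: "d \<ge> 1" using minpoly_deg[OF m] unfolding d_def .
  define P where "P = (\<Sum>i<d. monom (a i) i)"
  have cP: "coeff P j = (if j < d then a j else 0)" for j
    unfolding P_def by (simp add: coeff_sum coeff_monom)
  have "poly P x = (\<Sum>i<d. a i * x ^ i)" unfolding P_def by (simp add: poly_sum poly_monom)
  then have Px: "poly P x = 0" using s unfolding d_def by simp
  have PE: "poly_over E P" unfolding poly_over_def cP using aE subfieldD(1)[OF E_subfield] unfolding d_def by auto
  have "P = 0"
  proof (rule ccontr)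
    assume "P \<noteq> 0"
    then have "degree m \<le> degree P" using m PE Px unfolding is_min_poly_def by auto
    moreover have "degree P \<le> d - 1" by (rule degree_le) (use d1 in \<open>auto simp: cP\<close>)
    ultimately show False using d1 unfolding d_def by auto
  qed
  then show "a k = 0" using cP[of k] k unfolding d_def by simp
qed

lemma av_conj_le:
  assumes m: "is_min_poly E x m" and y: "poly m y = 0"
  shows "av y \<le> av x"
proof -
  define d where "d = degree m"
  obtain c where c: "c > 0" "\<forall>a. (\<forall>i\<in>{..<d}. a i \<in> E) \<longrightarrow> (\<forall>i\<in>{..<d}. c * av (a i) \<le> av (\<Sum>i\<in>{..<d}. a i * x ^ i))"
    using indep_bound[OF _ minpoly_indep[OF m]] unfolding d_def by blast
  have mE: "poly_over E m" "lead_coeff m = 1" "poly m x = 0" using m unfolding is_min_poly_def by auto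
  define Y where "Y = max 1 (av y) ^ d"
  have Y0: "Y > 0" unfolding Y_def by simp
  have Y: "av y ^ i \<le> Y" if "i < d" for i
  proof -
    have "av y ^ i \<le> max 1 (av y) ^ i" using av_nonneg by (intro power_mono) auto
    also have "\<dots> \<le> max 1 (av y) ^ d" using that by (intro power_increasing) auto
    finally show "av y ^ i \<le> Y" unfolding Y_def .
  qed
  have bound: "av y ^ n \<le> (Y / c) * av x ^ n" for n
  proof -
    obtain Q R where QR: "poly_over E Q" "poly_over E R" "monom 1 n = m * Q + R" "R = 0 \<or> degree R < d"
      using po_div[OF E_subfield mE(1,2) po_monom[OF E_subfield subfieldD(2)[OF E_subfield]]]
      unfolding d_def by blast
    have pw: "z ^ n = (\<Sum>i<d. coeff R i * z ^ i)" if "poly m z = 0" for z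
    proof -
      have "z ^ n = poly (monom 1 n) z" by (simp add: poly_monom)
      also have "\<dots> = poly R z" using QR(3) that by simp
      finally show ?thesis using poly_as_sum[OF QR(4)] by simp
    qed
    have RE: "\<forall>i\<in>{..<d}. coeff R i \<in> E" using QR(2) unfolding poly_over_def by auto
    have cb: "c * av (coeff R i) \<le> av (x ^ n)" if "i < d" for i
      using c(2) RE that pw[OF mE(3)] by auto
    have "av (y ^ n) = av (\<Sum>i<d. coeff R i * y ^ i)" using pw[OF y] by simp
    also have "\<dots> \<le> (Y / c) * av x ^ n"
    proof (rule av_sum_le)
      fix i assume "i \<in> {..<d}"
      then have i: "i < d" by simp
      have "av (coeff R i * y ^ i) = av (coeff R i) * av y ^ i" by (simp add: av_mult av_power)
      also have "\<dots> \<le> (av x ^ n / c) * Y"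
      proof (rule mult_mono)
        show "av (coeff R i) \<le> av x ^ n / c" using cb[OF i] c(1) by (simp add: field_simps av_power)
        show "av y ^ i \<le> Y" using Y[OF i] .
      qed (use av_nonneg c(1) in auto)
      also have "\<dots> = (Y / c) * av x ^ n" by simp
      finally show "av (coeff R i * y ^ i) \<le> (Y / c) * av x ^ n" .
    next
      show "0 \<le> Y / c * av x ^ n" using Y0 c(1) av_nonneg by simp
    qed
    finally show ?thesis by (simp add: av_power)
  qed
  show ?thesis
  proof (rule ccontr)
    assume "\<not> ?thesis"
    then have lt: "av x < av y" by simp
    show False
    proof (cases "av x = 0")
      case True
      then show False using bound[of 1] lt by simp
    next
      case False
      then have ax: "av x > 0" using av_nonneg by (metis order_le_less)
      have "1 < av y / av x" using lt ax by simp
      then obtain n where n: "Y / c < (av y / av x) ^ n" using real_arch_pow by blast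
      have "(av y / av x) ^ n = av y ^ n / av x ^ n" by (simp add: power_divide)
      also have "\<dots> \<le> Y / c" using bound[of n] ax by (simp add: field_simps)
      finally show False using n by simp
    qed
  qed
qed

lemma av_conj:
  assumes m: "is_min_poly E x m" and y: "poly m y = 0"
  shows "av y = av x"
proof -
  have my: "is_min_poly E y m" using minpoly_conj[OF E_subfield m y av_alg] .
  have "poly m x = 0" using m unfolding is_min_poly_def by auto
  then have "av x \<le> av y" using av_conj_le[OF my] by blast
  then show ?thesis using av_conj_le[OF m y] by simp
qed

lemma minpoly_E: "\<exists>m. is_min_poly E x m"
  using minpoly_exists[OF E_subfield] av_alg by blast

lemma hom_isometry:
  assumes M: "is_subfield M" "E \<subseteq> M" and h: "hom_on M \<tau>" and fx: "\<forall>e\<in>E. \<tau> e = e" and w: "w \<in> M"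
  shows "av (\<tau> w) = av w"
proof -
  obtain m where m: "is_min_poly E w m" using minpoly_E by blast
  have mE: "poly_over E m" "poly m w = 0" using m unfolding is_min_poly_def by auto
  have "\<tau> (poly m w) = poly (map_poly \<tau> m) (\<tau> w)" using h_poly[OF M(1) h po_mono[OF E_subfield mE(1) M(2)] w] .
  then have "poly m (\<tau> w) = 0" using mE map_fix[OF fx h_zero[OF M(1) h] mE(1)] h_zero[OF M(1) h] by simp
  then show ?thesis using av_conj[OF m] by simp
qed

end




context qpb
begin

lemma ext_iter:
  assumes m: "is_min_poly E x m" and y: "poly m y = 0" and S: "finite S"
  shows "\<exists>M \<tau>. is_subfield M \<and> E \<subseteq> M \<and> x \<in> M \<and> S \<subseteq> M \<and> hom_on M \<tau> \<and> (\<forall>e\<in>E. \<tau> e = e) \<and> \<tau> x = y"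
  using S
proof (induction S rule: finite_induct)
  case empty
  have h: "hom_on E id" unfolding hom_on_def by simp
  have alg: "\<And>w. \<exists>P. P \<noteq> 0 \<and> poly_over E P \<and> poly P w = 0" using av_alg by blast
  obtain M' \<tau>' where "is_subfield M'" "E \<subseteq> M'" "x \<in> M'" "hom_on M' \<tau>'" "\<forall>a\<in>E. \<tau>' a = id a" "\<tau>' x = y"
  proof -
    have y': "poly (map_poly id m) y = 0" using y by simp
    show ?thesis using ext_step[OF E_subfield h alg m y'] that by auto
  qed
  then show ?case by auto
next
  case (insert t S)
  then obtain M \<tau> where M: "is_subfield M" "E \<subseteq> M" "x \<in> M" "S \<subseteq> M" "hom_on M \<tau>" "\<forall>e\<in>E. \<tau> e = e" "\<tau> x = y"
    by blast
  have alg: "\<And>w. \<exists>P. P \<noteq> 0 \<and> poly_over M P \<and> poly P w = 0" using av_alg po_mono[OF E_subfield _ M(2)] by blast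
  obtain q where q: "is_min_poly M t q" using minpoly_exists[OF M(1)] alg by blast
  have "coeff (map_poly \<tau> q) (degree q) = 1"
    using q h_zero[OF M(1,5)] h_one[OF M(1,5)] unfolding is_min_poly_def by (simp add: coeff_map_poly)
  then have "degree (map_poly \<tau> q) \<ge> degree q" by (metis le_degree zero_neq_one)
  then have "degree (map_poly \<tau> q) > 0" using minpoly_deg[OF q] by auto
  then obtain s where s: "poly (map_poly \<tau> q) s = 0" using av_algclosed by blast
  obtain M' \<tau>' where M': "is_subfield M'" "M \<subseteq> M'" "t \<in> M'" "hom_on M' \<tau>'" "\<forall>a\<in>M. \<tau>' a = \<tau> a" "\<tau>' t = s"
    using ext_step[OF M(1) M(5) alg q s] by blast
  show ?case
  proof (intro exI[of _ M'] exI[of _ \<tau>'] conjI)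
    show "E \<subseteq> M'" "x \<in> M'" "insert t S \<subseteq> M'" using M M' by auto
    show "\<forall>e\<in>E. \<tau>' e = e" using M M' by auto
    show "\<tau>' x = y" using M M' by auto
  qed (use M' in auto)
qed

lemma fg_finite:
  assumes "x \<in> field_gen E (fst ` T \<union> snd ` T)"
  shows "\<exists>S\<subseteq>T. finite S \<and> x \<in> field_gen E (fst ` S \<union> snd ` S)"
proof -
  define U where "U = {w. \<exists>S\<subseteq>T. finite S \<and> w \<in> field_gen E (fst ` S \<union> snd ` S)}"
  have UI: "w \<in> U" if "S \<subseteq> T" "finite S" "w \<in> field_gen E (fst ` S \<union> snd ` S)" for w S
    unfolding U_def using that by blast
  have UE: "\<exists>S. S \<subseteq> T \<and> finite S \<and> w \<in> field_gen E (fst ` S \<union> snd ` S)" if "w \<in> U" for w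
    using that unfolding U_def by blast
  have mono: "field_gen E (fst ` S1 \<union> snd ` S1) \<subseteq> field_gen E (fst ` (S1 \<union> S2) \<union> snd ` (S1 \<union> S2))" for S1 S2 :: "('a \<times> 'a) set"
    by (rule field_gen_mono) auto
  have mono2: "field_gen E (fst ` S2 \<union> snd ` S2) \<subseteq> field_gen E (fst ` (S1 \<union> S2) \<union> snd ` (S1 \<union> S2))" for S1 S2 :: "('a \<times> 'a) set"
    by (rule field_gen_mono) auto
  have EU: "E \<subseteq> U"
  proof
    fix w assume "w \<in> E"
    then have "w \<in> field_gen E (fst ` {} \<union> snd ` {})" using field_gen_sup(1) by blast
    then show "w \<in> U" by (intro UI[of "{}"]) auto
  qed
  have sub: "is_subfield U"
    unfolding is_subfield_def
  proof (intro conjI ballI)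
    show "0 \<in> U" using EU subfieldD(1)[OF E_subfield] by blast
    show "1 \<in> U" using EU subfieldD(2)[OF E_subfield] by blast
    fix a b assume "a \<in> U" "b \<in> U"
    obtain S1 where S1: "S1 \<subseteq> T" "finite S1" "a \<in> field_gen E (fst ` S1 \<union> snd ` S1)" using UE[OF \<open>a \<in> U\<close>] by blast
    obtain S2 where S2: "S2 \<subseteq> T" "finite S2" "b \<in> field_gen E (fst ` S2 \<union> snd ` S2)" using UE[OF \<open>b \<in> U\<close>] by blast
    have ab: "a \<in> field_gen E (fst ` (S1 \<union> S2) \<union> snd ` (S1 \<union> S2))" "b \<in> field_gen E (fst ` (S1 \<union> S2) \<union> snd ` (S1 \<union> S2))"
      using subsetD[OF mono[of S1 S2] S1(3)] subsetD[OF mono2[of S2 S1] S2(3)] by blast+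
    have S12: "S1 \<union> S2 \<subseteq> T" "finite (S1 \<union> S2)" using S1 S2 by auto
    show "a + b \<in> U" by (rule UI[OF S12 subfieldD(3)[OF field_gen_subfield ab]])
    show "a * b \<in> U" by (rule UI[OF S12 subfieldD(4)[OF field_gen_subfield ab]])
  next
    fix a assume "a \<in> U"
    from UE[OF \<open>a \<in> U\<close>] obtain S1 where S: "S1 \<subseteq> T" "finite S1" "a \<in> field_gen E (fst ` S1 \<union> snd ` S1)" by (elim exE conjE)
    show "- a \<in> U" by (rule UI[OF S(1,2) subfieldD(5)[OF field_gen_subfield S(3)]])
    show "inverse a \<in> U" by (rule UI[OF S(1,2) subfieldD(6)[OF field_gen_subfield S(3)]])
  qed
  have GU: "fst ` T \<union> snd ` T \<subseteq> U"
  proof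
    fix w assume "w \<in> fst ` T \<union> snd ` T"
    then obtain P where P: "P \<in> T" "w = fst P \<or> w = snd P" by blast
    have "w \<in> fst ` {P} \<union> snd ` {P}" using P(2) by (simp, blast)
    then have w: "w \<in> field_gen E (fst ` {P} \<union> snd ` {P})" by (rule subsetD[OF field_gen_sup(2)])
    have P1: "{P} \<subseteq> T" "finite {P}" using P(1) by auto
    show "w \<in> U" by (rule UI[OF P1 w])
  qed
  have "x \<in> U" using field_gen_least[OF sub EU GU] assms by blast
  then show ?thesis using UE by blast
qed

lemma eval_pres:
  assumes M: "is_subfield M" "E \<subseteq> M" and h: "hom_on M \<tau>" and fx: "\<forall>e\<in>E. \<tau> e = e"
    and ab: "a \<in> M" "b \<in> M" and ev: "av_eval av f (a, b) 0"
  shows "av_eval av f (\<tau> a, \<tau> b) 0"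
proof -
  define g where "g = (\<lambda>(i,j). of_rat (f (i,j)) * a ^ i * b ^ j)"
  define g' where "g' = (\<lambda>(i,j). of_rat (f (i,j)) * \<tau> a ^ i * \<tau> b ^ j)"
  have gM: "g (i, j) \<in> M" for i j
  proof -
    have r: "of_rat (f (i,j)) \<in> M" using rat_E M(2) by blast
    show ?thesis unfolding g_def
      by (simp only: case_prod_conv) (intro subfieldD(4)[OF M(1)] r subfield_power[OF M(1)] ab)
  qed
  have gM': "g ij \<in> M" for ij using gM by (cases ij) simp
  have tg: "\<tau> (g ij) = g' ij" for ij
  proof (cases ij)
    case (Pair i j)
    have r: "of_rat (f (i,j)) \<in> M" using rat_E M(2) by blast
    have pw: "a ^ i \<in> M" "b ^ j \<in> M" using subfield_power[OF M(1)] ab by auto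
    have "\<tau> (g (i,j)) = \<tau> (of_rat (f (i,j)) * a ^ i) * \<tau> (b ^ j)"
      unfolding g_def by (simp only: case_prod_conv) (rule h_mult[OF M(1) h subfieldD(4)[OF M(1) r pw(1)] pw(2)])
    also have "\<dots> = \<tau> (of_rat (f (i,j))) * \<tau> (a ^ i) * \<tau> (b ^ j)"
      using h_mult[OF M(1) h r pw(1)] by simp
    also have "\<dots> = of_rat (f (i,j)) * \<tau> a ^ i * \<tau> b ^ j"
      using fx rat_E h_power[OF M(1) h] ab by simp
    finally show ?thesis unfolding Pair g'_def by simp
  qed
  have sumeq: "av (sum g' S - 0) = av (sum g S - 0)" for S
  proof -
    have s1: "sum g' S = (\<Sum>x\<in>S. \<tau> (g x))" by (simp only: tg)
    have s2: "\<tau> (sum g S) = (\<Sum>x\<in>S. \<tau> (g x))" by (rule h_sum[OF M(1) h gM'])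
    have sM: "sum g S \<in> M" by (rule subfield_sum[OF M(1) gM'])
    have "sum g' S = \<tau> (sum g S)" using s1 s2 by simp
    moreover have "av (\<tau> (sum g S)) = av (sum g S)"
      by (rule hom_isometry[OF M h fx sM])
    ultimately show ?thesis by simp
  qed
  have "av_has_sum av g 0" using ev unfolding av_eval_def g_def fst_conv snd_conv .
  then have "av_has_sum av g' 0" unfolding av_has_sum_def sumeq .
  then show ?thesis unfolding av_eval_def g'_def fst_conv snd_conv .
qed

end




theorem theorem5p1:
  fixes av :: "'a::field_char_0 \<Rightarrow> real" and p h1 h2 n :: nat
  assumes "prime p" and "h1 > 0" and "h2 > 0" and "coprime h1 h2"
    and "is_Qp_bar p av" and "n \<ge> 1"
  shows "galois_ext (Qp_in av)
           (field_gen (Qp_in av) ((fst ` LT_torsion av p h1 h2 n) \<union> (snd ` LT_torsion av p h1 h2 n)))"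
proof -
  interpret qpb p av by unfold_locales (rule assms(5))
  define T where "T = LT_torsion av p h1 h2 n"
  define K where "K = field_gen E (fst ` T \<union> snd ` T)"
  have Ksub: "is_subfield K" unfolding K_def by (rule field_gen_subfield)
  have EK: "E \<subseteq> K" unfolding K_def by (rule field_gen_sup(1))
  have GK: "fst ` T \<union> snd ` T \<subseteq> K" unfolding K_def by (rule field_gen_sup(2))
  have Tpres: "(\<tau> (fst P), \<tau> (snd P)) \<in> T"
    if M: "is_subfield M" "E \<subseteq> M" and h: "hom_on M \<tau>" and fx: "\<forall>e\<in>E. \<tau> e = e"
      and P: "P \<in> T" "fst P \<in> M" "snd P \<in> M" for M \<tau> P
  proof -
    obtain a b where ab: "P = (a, b)" by (cases P)
    have abM: "a \<in> M" "b \<in> M" using P ab by auto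
    have c: "av a < 1" "av b < 1"
      "av_eval av (fst (LT_mult p h1 h2 (of_nat (p ^ n)))) (a, b) 0"
      "av_eval av (snd (LT_mult p h1 h2 (of_nat (p ^ n)))) (a, b) 0"
      using P(1) unfolding T_def LT_torsion_def ab by auto
    have "av (\<tau> a) < 1" "av (\<tau> b) < 1" using c hom_isometry[OF M h fx] abM by auto
    moreover have "av_eval av (fst (LT_mult p h1 h2 (of_nat (p ^ n)))) (\<tau> a, \<tau> b) 0"
      by (rule eval_pres[OF M h fx abM c(3)])
    moreover have "av_eval av (snd (LT_mult p h1 h2 (of_nat (p ^ n)))) (\<tau> a, \<tau> b) 0"
      by (rule eval_pres[OF M h fx abM c(4)])
    ultimately show ?thesis unfolding T_def LT_torsion_def ab by simp
  qed
  have main: "y \<in> K" if x: "x \<in> K" and m: "is_min_poly E x m" and y: "poly m y = 0" for x m y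
  proof -
    obtain S where S: "S \<subseteq> T" "finite S" "x \<in> field_gen E (fst ` S \<union> snd ` S)"
      using fg_finite x unfolding K_def by blast
    have finG: "finite (fst ` S \<union> snd ` S)" using S(2) by simp
    obtain M \<tau> where M: "is_subfield M" "E \<subseteq> M" "x \<in> M" "fst ` S \<union> snd ` S \<subseteq> M" "hom_on M \<tau>"
      "\<forall>e\<in>E. \<tau> e = e" "\<tau> x = y"
      using ext_iter[OF m y finG] by blast
    define A where "A = {w \<in> M. \<tau> w \<in> K}"
    have Asub: "is_subfield A"
      unfolding is_subfield_def
    proof (intro conjI ballI)
      show "0 \<in> A" unfolding A_def using subfieldD(1)[OF M(1)] subfieldD(1)[OF Ksub] h_zero[OF M(1) M(5)] by simp
      show "1 \<in> A" unfolding A_def using subfieldD(2)[OF M(1)] subfieldD(2)[OF Ksub] h_one[OF M(1) M(5)] by simp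
      fix a b assume a: "a \<in> A" and b: "b \<in> A"
      then have ab: "a \<in> M" "b \<in> M" "\<tau> a \<in> K" "\<tau> b \<in> K" unfolding A_def by auto
      show "a + b \<in> A" unfolding A_def
        using subfieldD(3)[OF M(1) ab(1,2)] subfieldD(3)[OF Ksub ab(3,4)] h_add[OF M(1) M(5) ab(1,2)] by simp
      show "a * b \<in> A" unfolding A_def
        using subfieldD(4)[OF M(1) ab(1,2)] subfieldD(4)[OF Ksub ab(3,4)] h_mult[OF M(1) M(5) ab(1,2)] by simp
    next
      fix a assume a: "a \<in> A"
      then have ab: "a \<in> M" "\<tau> a \<in> K" unfolding A_def by auto
      show "- a \<in> A" unfolding A_def
        using subfieldD(5)[OF M(1) ab(1)] subfieldD(5)[OF Ksub ab(2)] h_uminus[OF M(1) M(5) ab(1)] by simp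
      show "inverse a \<in> A" unfolding A_def
        using subfieldD(6)[OF M(1) ab(1)] subfieldD(6)[OF Ksub ab(2)] h_inverse[OF M(1) M(5) ab(1)] by simp
    qed
    have EA: "E \<subseteq> A" unfolding A_def using M(2,6) EK by auto
    have GA: "fst ` S \<union> snd ` S \<subseteq> A"
    proof
      fix w assume w: "w \<in> fst ` S \<union> snd ` S"
      then obtain P where P: "P \<in> S" "w = fst P \<or> w = snd P" by blast
      have PM: "fst P \<in> M" "snd P \<in> M" using M(4) P(1) by auto
      have "(\<tau> (fst P), \<tau> (snd P)) \<in> T" by (rule Tpres[OF M(1,2,5,6) _ PM]) (use P S in blast)
      then have "\<tau> (fst P) \<in> fst ` T" "\<tau> (snd P) \<in> snd ` T" by (metis fst_conv image_eqI, metis snd_conv image_eqI)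
      then have "\<tau> w \<in> K" using P(2) GK by blast
      moreover have "w \<in> M" using w M(4) by blast
      ultimately show "w \<in> A" unfolding A_def by blast
    qed
    have "x \<in> A" using field_gen_least[OF Asub EA GA] S(3) by blast
    then show ?thesis using M(7) unfolding A_def by blast
  qed
  have "galois_ext E K"
    unfolding galois_ext_def
  proof (intro conjI ballI)
    show "is_subfield E" by (rule E_subfield)
    show "is_subfield K" by (rule Ksub)
    show "E \<subseteq> K" by (rule EK)
    fix x assume x: "x \<in> K"
    obtain m where m: "is_min_poly E x m" using minpoly_E by blast
    have "\<forall>y. poly m y = 0 \<longrightarrow> y \<in> K \<and> order y m = 1"
    proof (intro allI impI conjI)
      fix y assume y: "poly m y = 0"
      show "y \<in> K" by (rule main[OF x m y])
      show "order y m = 1" by (rule minpoly_sep[OF E_subfield minpoly_conj[OF E_subfield m y av_alg]])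
    qed
    then show "\<exists>m. is_min_poly E x m \<and> (\<forall>y. poly m y = 0 \<longrightarrow> y \<in> K \<and> order y m = 1)" using m by blast
  qed
  then show ?thesis unfolding K_def T_def .
qed


end
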